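(* Let $n,d$ be positive integers with $d$ dividing $n$, let $C_n=\langle a\mid a^n=e\rangle$, let $l$ be an integer, and let $\Delta=\{a^{jn/d+l}: j=0,\dots,d-1\}$. For complex numbers $W_0,\dots,W_{d-1}$, the operator $W=\sum_{j=0}^{d-1}W_jU_{a^{jn/d+l}}$ on $\ell^2(C_n)$ is unitary if and only if there exist real numbers $\theta_0,\dots,\theta_{d-1}$ such that $W_j=\frac1d\sum_{k=0}^{d-1}e^{i\theta_k}e^{2\pi i kj/d}$ for all $j=0,\dots,d-1$.
   Context: For a group $\Gamma$, let $\ell^2(\Gamma)$ have orthonormal basis $\{|g\rangle\}_{g\in\Gamma}$ and for $\delta\in\Gamma$ let $U_\delta$ be the unitary with $U_\delta|g\rangle=|g\delta\rangle$. Such a unitary $W$ with all $W_j$ nonzero is a homogeneous scalar quantum walk on the Cayley graph $C_\Delta(C_n)$ (vertex set $C_n$, directed edges $(g,g\delta)$ for $\delta\in\Delta$). *)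

theory Defs
  imports "HOL-Analysis.Analysis"
begin

text \<open>The cyclic group C_n = <a | a^n = e> is represented by exponents {0..<n},
  a^i a^j = a^((i+j) mod n).  The Hilbert space l^2(C_n) has orthonormal basis
  |g>, g < n; a linear operator on it is given by its matrix entries
  M h g = <h| M |g> for h, g < n.\<close>

definition shift_op :: "nat \<Rightarrow> int \<Rightarrow> nat \<Rightarrow> nat \<Rightarrow> complex" where
  "shift_op n s h g = (if int h = (int g + s) mod int n then 1 else 0)"

definition walk_op :: "nat \<Rightarrow> nat \<Rightarrow> int \<Rightarrow> (nat \<Rightarrow> complex) \<Rightarrow> nat \<Rightarrow> nat \<Rightarrow> complex" where
  "walk_op n d l W h g = (\<Sum>j<d. W j * shift_op n (int (j * (n div d)) + l) h g)"

definition unitary_op :: "nat \<Rightarrow> (nat \<Rightarrow> nat \<Rightarrow> complex) \<Rightarrow> bool" where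
  "unitary_op n M \<longleftrightarrow>
     (\<forall>g<n. \<forall>g'<n. (\<Sum>h<n. cnj (M h g) * M h g') = (if g = g' then 1 else 0)) \<and>
     (\<forall>h<n. \<forall>h'<n. (\<Sum>g<n. M h g * cnj (M h' g)) = (if h = h' then 1 else 0))"

end

theory Submission
  imports Defs
begin


definition ee :: "nat \<Rightarrow> int \<Rightarrow> complex" where
  "ee d x = exp (2 * of_real pi * \<i> * of_int x / of_nat d)"

lemma ee_add: "ee d a * ee d b = ee d (a + b)"
  unfolding ee_def by (simp add: exp_add[symmetric] add_divide_distrib algebra_simps)

lemma ee_cnj: "cnj (ee d a) = ee d (- a)"
  unfolding ee_def by (simp add: exp_cnj)

lemma ee_pow: "ee d (int k * a) = ee d a ^ k"
  unfolding ee_def by (simp add: exp_of_nat_mult[symmetric] algebra_simps)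

lemma ee_one_iff:
  assumes "0 < d" shows "ee d a = 1 \<longleftrightarrow> int d dvd a"
proof
  assume "ee d a = 1"
  then obtain q :: int where q: "2 * pi * of_int a / of_nat d = of_int (2 * q) * pi"
    unfolding ee_def exp_eq_1 by auto
  then have "of_int a = real d * of_int q" using assms by (simp add: field_simps)
  then have "a = int d * q" by (metis of_int_eq_iff of_int_mult of_int_of_nat_eq)
  then show "int d dvd a" by simp
next
  assume "int d dvd a"
  then obtain q where "a = int d * q" by auto
  then show "ee d a = 1" unfolding ee_def exp_eq_1 using assms
    by (intro conjI exI[of _ q]) (simp_all add: field_simps)
qed

lemma ee_sum:
  assumes "0 < d" shows "(\<Sum>k<d. ee d (int k * x)) = (if int d dvd x then of_nat d else 0)"
proof (cases "int d dvd x")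
  case True
  then have "\<And>k. ee d (int k * x) = 1" using ee_one_iff[OF assms] by auto
  then show ?thesis using True by simp
next
  case False
  then have z: "ee d x \<noteq> 1" using ee_one_iff[OF assms] by auto
  have "ee d (int d * x) = 1" by (simp add: ee_one_iff[OF assms])
  then have "ee d x ^ d = 1" using ee_pow[of d d x] by simp
  then show ?thesis using False z by (simp add: ee_pow sum_gp_strict)
qed

lemma ee_thm: "exp (2 * of_real pi * \<i> * of_nat k * of_nat j / of_nat d) = ee d (int k * int j)"
  unfolding ee_def by (simp add: algebra_simps)

lemma dvd_diff_less:
  assumes "k < d" "r < d" shows "int d dvd int k - int r \<longleftrightarrow> k = r"
proof
  assume "int d dvd int k - int r"
  then have "int k mod int d = int r mod int d" by (simp add: mod_eq_dvd_iff)
  then show "k = r" using assms by simp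
qed simp

definition Ac :: "nat \<Rightarrow> (nat \<Rightarrow> complex) \<Rightarrow> int \<Rightarrow> complex" where
  "Ac d W t = (\<Sum>j<d. \<Sum>j'<d. cnj (W j) * W j' * (if int d dvd t + int j - int j' then 1 else 0))"

definition GG :: "nat \<Rightarrow> (nat \<Rightarrow> complex) \<Rightarrow> nat \<Rightarrow> complex" where
  "GG d W r = (\<Sum>j<d. W j * ee d (- (int r * int j)))"

lemma ind_ee: assumes "0 < d"
  shows "(if int d dvd y then 1 else 0) = (1 / of_nat d) * (\<Sum>r<d. ee d (int r * y))"
  using assms by (simp add: ee_sum)

lemma cnj_GG: "cnj (GG d W r) = (\<Sum>j<d. cnj (W j) * ee d (int r * int j))"
  unfolding GG_def by (simp add: ee_cnj)

lemma Ac_term: "cnj (W j) * W j' * ((1 / of_nat d) * ee d (int r * (t + int j - int j'))) =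
   (1 / of_nat d) * (ee d (int r * t) * (cnj (W j) * ee d (int r * int j)) * (W j' * ee d (- (int r * int j'))))"
proof -
  have e: "ee d (int r * (t + int j - int j')) = ee d (int r * t) * ee d (int r * int j) * ee d (- (int r * int j'))"
    by (simp add: ee_add algebra_simps)
  show ?thesis unfolding e by (simp only: mult_ac)
qed

lemma Ac_fourier: assumes "0 < d"
  shows "Ac d W t = (1 / of_nat d) * (\<Sum>r<d. ee d (int r * t) * (cnj (GG d W r) * GG d W r))"
proof -
  have "Ac d W t = (\<Sum>j<d. \<Sum>j'<d. \<Sum>r<d. (1 / of_nat d) *
      (ee d (int r * t) * (cnj (W j) * ee d (int r * int j)) * (W j' * ee d (- (int r * int j')))))"
    unfolding Ac_def ind_ee[OF assms] sum_distrib_left Ac_term mult.assoc[of "1 / of_nat d"] ..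
  also have "\<dots> = (\<Sum>r<d. \<Sum>j<d. \<Sum>j'<d. (1 / of_nat d) *
      (ee d (int r * t) * (cnj (W j) * ee d (int r * int j)) * (W j' * ee d (- (int r * int j')))))"
    by (subst sum.swap, subst sum.swap, rule refl)
  also have "\<dots> = (1 / of_nat d) * (\<Sum>r<d. ee d (int r * t) * (cnj (GG d W r) * GG d W r))"
    unfolding cnj_GG unfolding GG_def sum_product unfolding sum_distrib_left mult.assoc ..
  finally show ?thesis .
qed

lemma delta_sum: assumes "r < d"
  shows "(\<Sum>k<d. f k * (if int d dvd int k - int r then 1 else (0::complex))) = f r"
proof -
  have "(\<Sum>k<d. f k * (if int d dvd int k - int r then 1 else (0::complex))) = (\<Sum>k<d. if k = r then f k else 0)"
    by (intro sum.cong refl) (simp add: dvd_diff_less assms)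
  also have "\<dots> = f r" using assms by simp
  finally show ?thesis .
qed

lemma ortho: assumes "0 < d"
  shows "(\<Sum>t<d. ee d (int r * int t) * ee d (- (int s * int t))) = of_nat d * (if int d dvd int r - int s then 1 else 0)"
proof -
  have "(\<Sum>t<d. ee d (int r * int t) * ee d (- (int s * int t))) = (\<Sum>t<d. ee d (int t * (int r - int s)))"
    by (intro sum.cong refl) (simp add: ee_add algebra_simps)
  then show ?thesis by (simp add: ee_sum assms)
qed

lemma Ac_delta_imp:
  assumes d: "0 < d" and A: "\<forall>t. Ac d W t = (if int d dvd t then 1 else 0)" and s: "s < d"
  shows "cnj (GG d W s) * GG d W s = 1"
proof -
  have "(\<Sum>t<d. Ac d W (int t) * ee d (- (int s * int t))) = (\<Sum>t<d. if t = 0 then 1 else 0)"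
    using A by (intro sum.cong refl) (auto simp: dvd_diff_less[of _ d 0, simplified] d ee_def)
  also have "\<dots> = 1" using d by simp
  finally have 1: "(\<Sum>t<d. Ac d W (int t) * ee d (- (int s * int t))) = 1" .
  have "(\<Sum>t<d. Ac d W (int t) * ee d (- (int s * int t))) =
     (1 / of_nat d) * (\<Sum>r<d. (cnj (GG d W r) * GG d W r) * (\<Sum>t<d. ee d (int r * int t) * ee d (- (int s * int t))))"
    unfolding Ac_fourier[OF d] sum_distrib_right sum_distrib_left
    apply (subst sum.swap)
    apply (intro sum.cong refl)
    by (simp add: mult_ac)
  also have "\<dots> = (1 / of_nat d) * (\<Sum>r<d. (cnj (GG d W r) * GG d W r) * of_nat d * (if int d dvd int r - int s then 1 else 0))"
    by (simp add: ortho d mult.assoc)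
  also have "\<dots> = cnj (GG d W s) * GG d W s"
    using d by (subst delta_sum[OF s]) simp
  finally show ?thesis using 1 by simp
qed

lemma inversion: assumes d: "0 < d" and j: "j < d"
  shows "W j = (1 / of_nat d) * (\<Sum>k<d. GG d W k * ee d (int k * int j))"
proof -
  have "(\<Sum>k<d. GG d W k * ee d (int k * int j)) = (\<Sum>j'<d. W j' * (\<Sum>k<d. ee d (int j * int k) * ee d (- (int j' * int k))))"
    unfolding GG_def sum_distrib_right sum_distrib_left
    apply (subst sum.swap)
    apply (intro sum.cong refl)
    by (simp add: mult_ac)
  also have "\<dots> = (\<Sum>j'<d. W j' * of_nat d * (if int d dvd int j' - int j then 1 else 0))"
    apply (intro sum.cong refl)
    apply (simp add: ortho d)
    by (metis dvd_diff_commute)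
  also have "\<dots> = W j * of_nat d" by (rule delta_sum[OF j])
  finally show ?thesis using d by simp
qed

lemma GG_of_form:
  assumes d: "0 < d" and W: "\<forall>j<d. W j = (1 / of_nat d) * (\<Sum>k<d. u k * ee d (int k * int j))" and r: "r < d"
  shows "GG d W r = u r"
proof -
  have "GG d W r = (\<Sum>j<d. (1 / of_nat d) * (\<Sum>k<d. u k * ee d (int k * int j)) * ee d (- (int r * int j)))"
    unfolding GG_def using W by (intro sum.cong refl) auto
  also have "\<dots> = (1 / of_nat d) * (\<Sum>k<d. u k * (\<Sum>j<d. ee d (int k * int j) * ee d (- (int r * int j))))"
    unfolding sum_distrib_right sum_distrib_left
    apply (subst sum.swap)
    apply (intro sum.cong refl)
    by (simp add: mult_ac)
  also have "\<dots> = (1 / of_nat d) * (\<Sum>k<d. u k * of_nat d * (if int d dvd int k - int r then 1 else 0))"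
    by (simp add: ortho d mult.assoc)
  also have "\<dots> = u r" using d by (subst delta_sum[OF r]) simp
  finally show ?thesis .
qed

lemma fourier_char:
  assumes d: "0 < d"
  shows "(\<forall>t. Ac d W t = (if int d dvd t then 1 else 0)) \<longleftrightarrow>
    (\<exists>\<theta> :: nat \<Rightarrow> real. \<forall>j<d.
       W j = (1 / of_nat d) * (\<Sum>k<d. exp (\<i> * of_real (\<theta> k)) *
                 exp (2 * of_real pi * \<i> * of_nat k * of_nat j / of_nat d)))"
proof
  assume A: "\<forall>t. Ac d W t = (if int d dvd t then 1 else 0)"
  define \<theta> where "\<theta> k = Arg (GG d W k)" for k
  have u: "exp (\<i> * of_real (\<theta> k)) = GG d W k" if k: "k < d" for k
  proof -
    have c: "cnj (GG d W k) * GG d W k = 1" by (rule Ac_delta_imp[OF d A k])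
    then have "cmod (GG d W k) = 1"
    proof -
      have "(cmod (GG d W k))^2 = 1" using complex_mod_mult_cnj[of "GG d W k"] c by (simp add: mult.commute)
      then show ?thesis using norm_ge_zero[of "GG d W k"] by (auto simp add: power2_eq_1_iff)
    qed
    moreover have "GG d W k \<noteq> 0" using c by auto
    ultimately show ?thesis unfolding \<theta>_def cis_conv_exp[symmetric]
      by (simp add: cis_Arg sgn_div_norm)
  qed
  show "\<exists>\<theta> :: nat \<Rightarrow> real. \<forall>j<d.
       W j = (1 / of_nat d) * (\<Sum>k<d. exp (\<i> * of_real (\<theta> k)) *
                 exp (2 * of_real pi * \<i> * of_nat k * of_nat j / of_nat d))"
  proof (intro exI allI impI)
    fix j assume j: "j < d"
    show "W j = (1 / of_nat d) * (\<Sum>k<d. exp (\<i> * of_real (\<theta> k)) *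
                 exp (2 * of_real pi * \<i> * of_nat k * of_nat j / of_nat d))"
      unfolding ee_thm by (subst inversion[OF d j]) (simp add: u)
  qed
next
  assume "\<exists>\<theta> :: nat \<Rightarrow> real. \<forall>j<d.
       W j = (1 / of_nat d) * (\<Sum>k<d. exp (\<i> * of_real (\<theta> k)) *
                 exp (2 * of_real pi * \<i> * of_nat k * of_nat j / of_nat d))"
  then obtain \<theta> :: "nat \<Rightarrow> real" where th: "\<forall>j<d.
       W j = (1 / of_nat d) * (\<Sum>k<d. exp (\<i> * of_real (\<theta> k)) * ee d (int k * int j))"
    unfolding ee_thm by blast
  have G: "cnj (GG d W r) * GG d W r = 1" if r: "r < d" for r
  proof -
    have "GG d W r = exp (\<i> * of_real (\<theta> r))" by (rule GG_of_form[OF d th r])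
    then show ?thesis by (simp add: exp_cnj exp_add[symmetric])
  qed
  show "\<forall>t. Ac d W t = (if int d dvd t then 1 else 0)"
  proof
    fix t
    have "Ac d W t = (1 / of_nat d) * (\<Sum>r<d. ee d (int r * t))"
      unfolding Ac_fourier[OF d] by (simp add: G)
    then show "Ac d W t = (if int d dvd t then 1 else 0)" using d by (simp add: ee_sum)
  qed
qed

lemma pick:
  assumes "0 \<le> c" "c < int n"
  shows "(\<Sum>h<n. if int h = c then f h else (0::complex)) = f (nat c)"
proof -
  have "(\<Sum>h<n. if int h = c then f h else (0::complex)) = (\<Sum>h<n. if h = nat c then f h else 0)"
    using assms by (intro sum.cong refl) auto
  also have "\<dots> = f (nat c)" using assms by simp
  finally show ?thesis .
qed

lemma shift_pair:
  assumes n: "0 < n"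
  shows "(\<Sum>h<n. (c * shift_op n s h g) * (c' * shift_op n s' h g')) =
     c * c' * (if int n dvd (int g + s) - (int g' + s') then 1 else 0)"
proof -
  have "(\<Sum>h<n. (c * shift_op n s h g) * (c' * shift_op n s' h g')) =
     (\<Sum>h<n. if int h = (int g + s) mod int n then c * c' * (if int h = (int g' + s') mod int n then 1 else 0) else 0)"
    unfolding shift_op_def by (intro sum.cong refl) auto
  also have "\<dots> = c * c' * (if (int g + s) mod int n = (int g' + s') mod int n then 1 else 0)"
    using n by (subst pick) auto
  finally show ?thesis by (simp add: mod_eq_dvd_iff)
qed

lemma shift_iff:
  assumes "h < n" "g < n"
  shows "(int h = (int g + s) mod int n) \<longleftrightarrow> (int g = (int h - s) mod int n)"
proof -
  have "(int h = (int g + s) mod int n) \<longleftrightarrow> int h mod int n = (int g + s) mod int n" using assms by simp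
  also have "\<dots> \<longleftrightarrow> int n dvd int h - (int g + s)" by (simp add: mod_eq_dvd_iff)
  also have "\<dots> \<longleftrightarrow> int n dvd int g - (int h - s)"
    by (metis dvd_diff_commute diff_diff_eq2 diff_diff_eq add.commute)
  also have "\<dots> \<longleftrightarrow> int g mod int n = (int h - s) mod int n" by (simp add: mod_eq_dvd_iff)
  also have "\<dots> \<longleftrightarrow> int g = (int h - s) mod int n" using assms by simp
  finally show ?thesis .
qed

lemma shift_pair2:
  assumes n: "h < n" "h' < n"
  shows "(\<Sum>g<n. (c * shift_op n s h g) * (c' * shift_op n s' h' g)) =
     c * c' * (if int n dvd (int h - s) - (int h' - s') then 1 else 0)"
proof -
  have "(\<Sum>g<n. (c * shift_op n s h g) * (c' * shift_op n s' h' g)) =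
     (\<Sum>g<n. if int g = (int h - s) mod int n then c * c' * (if int h' = (int g + s') mod int n then 1 else 0) else 0)"
  proof (intro sum.cong refl)
    fix g assume "g \<in> {..<n}"
    then have e: "(int h = (int g + s) mod int n) \<longleftrightarrow> (int g = (int h - s) mod int n)"
      using assms shift_iff by auto
    show "(c * shift_op n s h g) * (c' * shift_op n s' h' g) =
      (if int g = (int h - s) mod int n then c * c' * (if int h' = (int g + s') mod int n then 1 else 0) else 0)"
      unfolding shift_op_def e by simp
  qed
  also have "\<dots> = c * c' * (if int h' = ((int h - s) mod int n + s') mod int n then 1 else 0)"
    using n by (subst pick) auto
  also have "(int h' = ((int h - s) mod int n + s') mod int n) \<longleftrightarrow> int h' mod int n = (int h - s + s') mod int n"
    using n by (simp add: mod_add_left_eq)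
  also have "\<dots> \<longleftrightarrow> int n dvd (int h - s) - (int h' - s')"
    by (simp add: mod_eq_dvd_iff dvd_diff_commute algebra_simps)
  finally show ?thesis .
qed

definition BB :: "nat \<Rightarrow> nat \<Rightarrow> (nat \<Rightarrow> complex) \<Rightarrow> int \<Rightarrow> complex" where
  "BB n d W x = (\<Sum>j<d. \<Sum>j'<d. cnj (W j) * W j' *
     (if int n dvd x + int (j * (n div d)) - int (j' * (n div d)) then 1 else 0))"

lemma cnj_shift: "cnj (shift_op n s h g) = shift_op n s h g"
  unfolding shift_op_def by simp

lemma gram1:
  assumes n: "0 < n"
  shows "(\<Sum>h<n. cnj (walk_op n d l W h g) * walk_op n d l W h g') = BB n d W (int g - int g')"
proof -
  let ?m = "n div d"
  have "(\<Sum>h<n. cnj (walk_op n d l W h g) * walk_op n d l W h g') =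
    (\<Sum>h<n. \<Sum>j<d. \<Sum>j'<d. (cnj (W j) * shift_op n (int (j * ?m) + l) h g) * (W j' * shift_op n (int (j' * ?m) + l) h g'))"
    unfolding walk_op_def cnj_sum complex_cnj_mult cnj_shift sum_product ..
  also have "\<dots> = (\<Sum>j<d. \<Sum>j'<d. \<Sum>h<n. (cnj (W j) * shift_op n (int (j * ?m) + l) h g) * (W j' * shift_op n (int (j' * ?m) + l) h g'))"
    by (rule trans[OF sum.swap sum.cong[OF refl sum.swap]])
  also have "\<dots> = BB n d W (int g - int g')"
    unfolding BB_def shift_pair[OF n]
  proof (intro sum.cong refl)
    fix j j'
    have "(int g + (int (j * ?m) + l)) - (int g' + (int (j' * ?m) + l)) = (int g - int g') + int (j * ?m) - int (j' * ?m)"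
      by simp
    note eq = this
    show "cnj (W j) * W j' * (if int n dvd (int g + (int (j * ?m) + l)) - (int g' + (int (j' * ?m) + l)) then 1 else 0) =
      cnj (W j) * W j' * (if int n dvd (int g - int g') + int (j * ?m) - int (j' * ?m) then 1 else 0)"
      unfolding eq by simp
  qed
  finally show ?thesis .
qed

lemma gram2:
  assumes h: "h < n" "h' < n"
  shows "(\<Sum>g<n. walk_op n d l W h g * cnj (walk_op n d l W h' g)) = BB n d W (int h - int h')"
proof -
  let ?m = "n div d"
  have "(\<Sum>g<n. walk_op n d l W h g * cnj (walk_op n d l W h' g)) =
    (\<Sum>g<n. \<Sum>j<d. \<Sum>j'<d. (W j * shift_op n (int (j * ?m) + l) h g) * (cnj (W j') * shift_op n (int (j' * ?m) + l) h' g))"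
    unfolding walk_op_def cnj_sum complex_cnj_mult cnj_shift sum_product ..
  also have "\<dots> = (\<Sum>j<d. \<Sum>j'<d. \<Sum>g<n. (W j * shift_op n (int (j * ?m) + l) h g) * (cnj (W j') * shift_op n (int (j' * ?m) + l) h' g))"
    by (rule trans[OF sum.swap sum.cong[OF refl sum.swap]])
  also have "\<dots> = (\<Sum>j<d. \<Sum>j'<d. cnj (W j') * W j *
     (if int n dvd (int h - int h') + int (j' * ?m) - int (j * ?m) then 1 else 0))"
    unfolding shift_pair2[OF h]
  proof (intro sum.cong refl)
    fix j j'
    have "(int h - (int (j * ?m) + l)) - (int h' - (int (j' * ?m) + l)) = (int h - int h') + int (j' * ?m) - int (j * ?m)"
      by simp
    note eq = this
    show "W j * cnj (W j') * (if int n dvd (int h - (int (j * ?m) + l)) - (int h' - (int (j' * ?m) + l)) then 1 else 0) =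
      cnj (W j') * W j * (if int n dvd (int h - int h') + int (j' * ?m) - int (j * ?m) then 1 else 0)"
      unfolding eq by simp
  qed
  also have "\<dots> = BB n d W (int h - int h')"
    unfolding BB_def by (rule sum.swap)
  finally show ?thesis .
qed

lemma dvd_split:
  assumes m: "0 < m"
  shows "(int (d * m) dvd x + int (j * m) - int (j' * m)) \<longleftrightarrow>
    (int m dvd x \<and> int d dvd x div int m + int j - int j')"
proof
  assume a: "int (d * m) dvd x + int (j * m) - int (j' * m)"
  have "int m dvd x + int (j * m) - int (j' * m)"
    using a by (auto intro: dvd_mult_right)
  moreover have "int m dvd int (j * m) - int (j' * m)" by simp
  ultimately have "int m dvd (x + int (j * m) - int (j' * m)) - (int (j * m) - int (j' * m))"
    by (rule dvd_diff)
  then have mx: "int m dvd x" by simp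
  then obtain q where q: "x = int m * q" by auto
  have "x + int (j * m) - int (j' * m) = (q + int j - int j') * int m" using q by (simp add: algebra_simps)
  then have "int d * int m dvd (q + int j - int j') * int m" using a by simp
  then have "int d dvd q + int j - int j'" using m by simp
  then show "int m dvd x \<and> int d dvd x div int m + int j - int j'" using mx q m by simp
next
  assume a: "int m dvd x \<and> int d dvd x div int m + int j - int j'"
  then obtain q where q: "x = int m * q" by auto
  have "x + int (j * m) - int (j' * m) = (q + int j - int j') * int m" using q by (simp add: algebra_simps)
  moreover have "int d dvd q + int j - int j'" using a q m by simp
  ultimately show "int (d * m) dvd x + int (j * m) - int (j' * m)" by simp
qed

lemma BB_Ac:
  assumes n: "n = d * m" and m: "0 < m" and d: "0 < d"
  shows "BB n d W x = (if int m dvd x then Ac d W (x div int m) else 0)"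
proof -
  have nd: "n div d = m" using n d by simp
  show ?thesis
  proof (cases "int m dvd x")
    case True
    then show ?thesis unfolding BB_def Ac_def nd unfolding n dvd_split[OF m] by simp
  next
    case False
    then show ?thesis unfolding BB_def Ac_def nd unfolding n dvd_split[OF m] by simp
  qed
qed

lemma Ac_mod: "Ac d W t = Ac d W (t mod int d)"
proof -
  have "\<And>a. int d dvd t + a \<longleftrightarrow> int d dvd t mod int d + a"
    by (metis dvd_eq_mod_eq_0 mod_add_left_eq)
  note aux = this
  show ?thesis unfolding Ac_def
  proof (intro sum.cong refl)
    fix j j'
    have e: "t + int j - int j' = t + (int j - int j')" "t mod int d + int j - int j' = t mod int d + (int j - int j')"
      by simp_all
    show "cnj (W j) * W j' * (if int d dvd t + int j - int j' then 1 else 0) =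
       cnj (W j) * W j' * (if int d dvd t mod int d + int j - int j' then 1 else 0)"
      unfolding e aux[of "int j - int j'"] ..
  qed
qed

lemma unitary_char:
  assumes n: "0 < n" and d: "0 < d" and dn: "d dvd n"
  shows "unitary_op n (walk_op n d l W) \<longleftrightarrow> (\<forall>t. Ac d W t = (if int d dvd t then 1 else 0))"
proof -
  obtain m where nm: "n = d * m" using dn by auto
  have m: "0 < m" using n nm by simp
  have "unitary_op n (walk_op n d l W) \<longleftrightarrow>
      (\<forall>g<n. \<forall>g'<n. BB n d W (int g - int g') = (if g = g' then 1 else 0))"
    unfolding unitary_op_def using gram1[OF n] gram2 by auto
  also have "\<dots> \<longleftrightarrow> (\<forall>t. Ac d W t = (if int d dvd t then 1 else 0))"
  proof
    assume P: "\<forall>g<n. \<forall>g'<n. BB n d W (int g - int g') = (if g = g' then 1 else 0)"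
    show "\<forall>t. Ac d W t = (if int d dvd t then 1 else 0)"
    proof
      fix t
      define r where "r = nat (t mod int d)"
      have r: "int r = t mod int d" "r < d" using d unfolding r_def by (auto simp: nat_less_iff)
      have rm: "r * m < n" using r(2) nm m by simp
      have "BB n d W (int (r * m) - int 0) = (if r * m = 0 then 1 else 0)" using P rm n by blast
      moreover have "BB n d W (int (r * m) - int 0) = Ac d W (int r)"
        using BB_Ac[OF nm m d] m by simp
      moreover have "Ac d W t = Ac d W (int r)" using Ac_mod r by simp
      moreover have "int d dvd t \<longleftrightarrow> r = 0" using r(1) by (simp add: dvd_eq_mod_eq_0) linarith
      ultimately show "Ac d W t = (if int d dvd t then 1 else 0)" using m by simp
    qed
  next
    assume A: "\<forall>t. Ac d W t = (if int d dvd t then 1 else 0)"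
    show "\<forall>g<n. \<forall>g'<n. BB n d W (int g - int g') = (if g = g' then 1 else 0)"
    proof (intro allI impI)
      fix g g' assume g: "g < n" "g' < n"
      show "BB n d W (int g - int g') = (if g = g' then 1 else 0)"
      proof (cases "int m dvd int g - int g'")
        case True
        then obtain q where q: "int g - int g' = int m * q" by auto
        have "BB n d W (int g - int g') = (if int d dvd q then 1 else 0)"
          using BB_Ac[OF nm m d] True A q m by simp
        moreover have "int d dvd q \<longleftrightarrow> int n dvd int g - int g'"
          using q nm m by simp
        moreover have "int n dvd int g - int g' \<longleftrightarrow> g = g'" using dvd_diff_less[OF g] .
        ultimately show ?thesis by simp
      next
        case False
        then show ?thesis using BB_Ac[OF nm m d] by auto
      qed
    qed
  qed
  finally show ?thesis .
qed


theorem mainTheorem10: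
  fixes n d :: nat and l :: int and W :: "nat \<Rightarrow> complex"
  assumes "0 < n" and "0 < d" and "d dvd n"
  shows "unitary_op n (walk_op n d l W) \<longleftrightarrow>
    (\<exists>\<theta> :: nat \<Rightarrow> real. \<forall>j<d.
       W j = (1 / of_nat d) * (\<Sum>k<d. exp (\<i> * of_real (\<theta> k)) *
                 exp (2 * of_real pi * \<i> * of_nat k * of_nat j / of_nat d)))"
  using unitary_char[OF assms] fourier_char[OF assms(2)] by simp

end
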